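(* Let $\mathcal{T}$ be an MPQ-tree of an interval graph $G=(V,E)$ and let $x\neq y$ be vertices with $node(x)=node(y)=P$, where $P$ is a P-node that is not a leaf of $\mathcal{T}$. Then $(x,y)$ is not an interval edge, i.e. $G-(x,y)$ is not an interval graph.
   Context: Graphs are finite and simple; for $G=(V,E)$ and $e\in E$, $G-e=(V,E\setminus\{e\})$. An edge $(x,y)\in E$ of an interval graph $G$ is an interval edge if $G-(x,y)$ is an interval graph. An MPQ-tree of an interval graph $G=(V,E)$, $V=\{1,\dots,n\}$, is a rooted plane tree whose nodes are P-nodes and Q-nodes. Each P-node carries a (possibly empty) set of vertices. A Q-node has $k\ge 3$ ordered positions $1,\dots,k$; position $i$ carries a set $S_i\subseteq V$ (the $i$-th section) and a child subtree $T_i$, which may be empty. Every vertex $v$ is assigned to exactly one node $node(v)$: either $v$ lies in the set of the P-node $node(v)$, or $node(v)$ is a Q-node and $v$ lies exactly in the sections $S_{l(v)},S_{l(v)+1},\dots,S_{r(v)}$ of it, with $l(v)<r(v)$. For a node with child subtrees $T_1,\dots,T_k$, $V_i$ denotes the set of vertices assigned to nodes of $T_i$ ($V_i=\emptyset$ if $T_i$ is empty). The maximal cliques of $G$ are in bijection with the descending paths from the root which at a P-node continue into one of its children (stopping if there is none) and at a Q-node choose a position $i$ and continue into $T_i$ (stopping if $T_i$ is empty); the clique is the union of the sets of the visited P-nodes and the chosen sections. Reading these cliques left to right gives a linear order of the maximal cliques, and the orders obtained this way after arbitrarily permuting children of P-nodes and reversing the positions of Q-nodes are exactly the orders of the maximal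 cliques of $G$ in which the cliques containing any fixed vertex are consecutive. Moreover, for every Q-node with sections $S_1,\dots,S_k$: (a) $V_1\neq\emptyset$ and $V_k\ne\emptyset$; (b) $S_1\subseteq S_2$ and $S_k\subseteq S_{k-1}$; (c) $S_{i-1}\cap S_i\neq\emptyset$ for $2\le i\le k$; (d) $S_{i-1}\neq S_i$ for $2\le i\le k$; (e) $(S_i\cap S_{i+1})\setminus S_1\neq\emptyset$ and $(S_{i-1}\cap S_i)\setminus S_k\neq\emptyset$ for $2\le i\le k-1$; (f) $(S_{i-1}\cup V_{i-1})\setminus S_i\neq\emptyset$ and $(S_i\cup V_i)\setminus S_{i-1}\neq\emptyset$ for $2\le i\le k$; and further (g) no empty P-node has an empty P-node as its parent, (h) no P-node has exactly one child whose root is a P-node, (i) every child subtree of a P-node is nonempty. *)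

theory Defs
  imports Complex_Main "HOL-Library.Multiset"
begin

definition simple_graph :: "'v set \<Rightarrow> 'v set set \<Rightarrow> bool" where
  "simple_graph V E \<longleftrightarrow> finite V \<and> (\<forall>e\<in>E. \<exists>u v. e = {u, v} \<and> u \<in> V \<and> v \<in> V \<and> u \<noteq> v)"

definition interval_graph :: "'v set \<Rightarrow> 'v set set \<Rightarrow> bool" where
  "interval_graph V E \<longleftrightarrow> simple_graph V E \<and>
     (\<exists>a b :: 'v \<Rightarrow> real. (\<forall>v\<in>V. a v \<le> b v) \<and>
        (\<forall>u\<in>V. \<forall>v\<in>V. u \<noteq> v \<longrightarrow> ({u, v} \<in> E \<longleftrightarrow> max (a u) (a v) \<le> min (b u) (b v))))"

definition del_edge :: "'v set set \<Rightarrow> 'v \<Rightarrow> 'v \<Rightarrow> 'v set set" where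
  "del_edge E x y = E - {{x, y}}"

definition interval_edge :: "'v set \<Rightarrow> 'v set set \<Rightarrow> 'v \<Rightarrow> 'v \<Rightarrow> bool" where
  "interval_edge V E x y \<longleftrightarrow> interval_graph V E \<and> {x, y} \<in> E \<and> interval_graph V (del_edge E x y)"

definition is_clique :: "'v set \<Rightarrow> 'v set set \<Rightarrow> 'v set \<Rightarrow> bool" where
  "is_clique V E C \<longleftrightarrow> C \<subseteq> V \<and> (\<forall>u\<in>C. \<forall>v\<in>C. u \<noteq> v \<longrightarrow> {u, v} \<in> E)"

definition max_cliques :: "'v set \<Rightarrow> 'v set set \<Rightarrow> 'v set set" where
  "max_cliques V E = {C. is_clique V E C \<and> (\<forall>C'. is_clique V E C' \<and> C \<subseteq> C' \<longrightarrow> C' = C)}"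

definition consecutive_clique_order :: "'v set \<Rightarrow> 'v set set \<Rightarrow> 'v set list \<Rightarrow> bool" where
  "consecutive_clique_order V E L \<longleftrightarrow> distinct L \<and> set L = max_cliques V E \<and>
     (\<forall>v\<in>V. \<exists>i j. \<forall>k<length L. v \<in> L ! k \<longleftrightarrow> i \<le> k \<and> k \<le> j)"

text \<open>A P-node carries a vertex set and a list of (nonempty) child subtrees; a Q-node
  carries a list of positions, each consisting of a section and a possibly empty
  (None) child subtree.\<close>
datatype 'v mpq = PN "'v set" "'v mpq list" | QN "('v set \<times> 'v mpq option) list"

fun child :: "'v mpq \<Rightarrow> nat \<Rightarrow> 'v mpq option" where
  "child (PN S ts) i = (if i < length ts then Some (ts ! i) else None)"
| "child (QN secs) i = (if i < length secs then snd (secs ! i) else None)"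

fun subtree_at :: "'v mpq \<Rightarrow> nat list \<Rightarrow> 'v mpq option" where
  "subtree_at T [] = Some T"
| "subtree_at T (i # p) = (case child T i of None \<Rightarrow> None | Some t \<Rightarrow> subtree_at t p)"

fun node_verts :: "'v mpq \<Rightarrow> 'v set" where
  "node_verts (PN S ts) = S"
| "node_verts (QN secs) = (\<Union>(S, t)\<in>set secs. S)"

definition tree_verts :: "'v mpq \<Rightarrow> 'v set" where
  "tree_verts T = (\<Union>{node_verts N | p N. subtree_at T p = Some N})"

definition slot_verts :: "'v mpq option \<Rightarrow> 'v set" where
  "slot_verts t = (case t of None \<Rightarrow> {} | Some t' \<Rightarrow> tree_verts t')"

text \<open>The left-to-right orders of maximal cliques (as unions along descending paths)
  obtainable after arbitrarily permuting children of P-nodes and reversing Q-nodes.\<close>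
definition qslot :: "('v mpq \<Rightarrow> 'v set list \<Rightarrow> bool) \<Rightarrow> 'v set \<times> 'v mpq option \<Rightarrow> 'v set list \<Rightarrow> bool" where
  "qslot R st l = (case st of (S, None) \<Rightarrow> l = [S]
                     | (S, Some t) \<Rightarrow> (\<exists>l'. R t l' \<and> l = map ((\<union>) S) l'))"

lemma qslot_mono[mono]: "(\<And>x y. R x y \<longrightarrow> R' x y) \<Longrightarrow> qslot R st l \<longrightarrow> qslot R' st l"
  by (auto simp: qslot_def split: prod.splits option.splits)

inductive is_order :: "'v mpq \<Rightarrow> 'v set list \<Rightarrow> bool" where
  leaf: "is_order (PN S []) [S]"
| pnode: "ts \<noteq> [] \<Longrightarrow> list_all2 is_order ts ls \<Longrightarrow> mset ls' = mset ls \<Longrightarrow>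
           is_order (PN S ts) (map ((\<union>) S) (concat ls'))"
| qnode: "list_all2 (qslot is_order) secs ls \<Longrightarrow> is_order (QN secs) (concat ls)"
| qnode_rev: "list_all2 (qslot is_order) secs ls \<Longrightarrow> is_order (QN secs) (concat (rev ls))"

text \<open>Structural conditions (a)-(f) on a Q-node (0-based indices, k = length secs).\<close>
definition qnode_ok :: "('v set \<times> 'v mpq option) list \<Rightarrow> bool" where
  "qnode_ok secs \<longleftrightarrow>
    (let k = length secs; S = (\<lambda>i. fst (secs ! i)); Vs = (\<lambda>i. slot_verts (snd (secs ! i))) in
      k \<ge> 3 \<and>
      Vs 0 \<noteq> {} \<and> Vs (k - 1) \<noteq> {} \<and>
      S 0 \<subseteq> S 1 \<and> S (k - 1) \<subseteq> S (k - 2) \<and>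
      (\<forall>i. 1 \<le> i \<and> i < k \<longrightarrow> S (i - 1) \<inter> S i \<noteq> {}) \<and>
      (\<forall>i. 1 \<le> i \<and> i < k \<longrightarrow> S (i - 1) \<noteq> S i) \<and>
      (\<forall>i. 1 \<le> i \<and> i \<le> k - 2 \<longrightarrow>
          (S i \<inter> S (i + 1)) - S 0 \<noteq> {} \<and> (S (i - 1) \<inter> S i) - S (k - 1) \<noteq> {}) \<and>
      (\<forall>i. 1 \<le> i \<and> i < k \<longrightarrow>
          (S (i - 1) \<union> Vs (i - 1)) - S i \<noteq> {} \<and> (S i \<union> Vs i) - S (i - 1) \<noteq> {}))"

text \<open>Conditions (g),(h) on a P-node ((i) holds by construction of the datatype).\<close>
definition pnode_ok :: "'v set \<Rightarrow> 'v mpq list \<Rightarrow> bool" where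
  "pnode_ok S ts \<longleftrightarrow>
     (S = {} \<longrightarrow> (\<forall>t\<in>set ts. \<forall>ts'. t \<noteq> PN {} ts')) \<and>
     \<not> (\<exists>S' ts'. ts = [PN S' ts'])"

definition mpq_tree :: "'v set \<Rightarrow> 'v set set \<Rightarrow> 'v mpq \<Rightarrow> bool" where
  "mpq_tree V E T \<longleftrightarrow>
     tree_verts T \<subseteq> V \<and>
     \<comment> \<open>every vertex is assigned to exactly one node\<close>
     (\<forall>v\<in>V. \<exists>!p. \<exists>N. subtree_at T p = Some N \<and> v \<in> node_verts N) \<and>
     \<comment> \<open>at a Q-node a vertex lies exactly in sections l..r with l < r\<close>
     (\<forall>p secs. subtree_at T p = Some (QN secs) \<longrightarrow>
        (\<forall>v\<in>node_verts (QN secs). \<exists>l r. l < r \<and> r < length secs \<and>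
            (\<forall>i<length secs. v \<in> fst (secs ! i) \<longleftrightarrow> l \<le> i \<and> i \<le> r))) \<and>
     \<comment> \<open>frontier orders = consecutive orders of the maximal cliques\<close>
     {L. is_order T L} = {L. consecutive_clique_order V E L} \<and>
     (\<forall>p secs. subtree_at T p = Some (QN secs) \<longrightarrow> qnode_ok secs) \<and>
     (\<forall>p S ts. subtree_at T p = Some (PN S ts) \<longrightarrow> pnode_ok S ts)"

end

theory Submission
  imports Defs
begin

lemma subtree_comp: "subtree_at T p = Some N \<Longrightarrow> subtree_at N q = subtree_at T (p @ q)"
proof (induction p arbitrary: T)
  case Nil then show ?case by simp
next
  case (Cons i p) then show ?case by (auto split: option.splits)
qed

lemma ex_order: "\<exists>L. is_order T L"
proof (induction T)
  case (PN S ts)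
  show ?case
  proof (cases "ts = []")
    case True then show ?thesis using is_order.leaf by blast
  next
    case False
    let ?ls = "map (\<lambda>t. SOME l. is_order t l) ts"
    have "list_all2 is_order ts ?ls"
      using PN by (auto simp: list_all2_conv_all_nth intro: someI_ex)
    then show ?thesis using is_order.pnode[OF False, of ?ls ?ls S] by blast
  qed
next
  case (QN secs)
  let ?f = "\<lambda>st. case st of (S, None) \<Rightarrow> [S] | (S, Some t) \<Rightarrow> map ((\<union>) S) (SOME l. is_order t l)"
  have "list_all2 (qslot is_order) secs (map ?f secs)"
    unfolding list_all2_conv_all_nth
  proof (intro conjI allI impI)
    fix i assume i: "i < length secs"
    obtain S0 t0 where st: "secs ! i = (S0, t0)" by (cases "secs ! i")
    have "secs ! i \<in> set secs" using i by simp
    show "qslot is_order (secs ! i) (map ?f secs ! i)"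
    proof (cases t0)
      case None then show ?thesis using i st by (simp add: qslot_def)
    next
      case (Some t)
      have "\<exists>l. is_order t l" using QN \<open>secs ! i \<in> set secs\<close> st Some by fastforce
      then have "is_order t (SOME l. is_order t l)" by (rule someI_ex)
      then show ?thesis using i st Some by (auto simp: qslot_def)
    qed
  qed simp
  then show ?case using is_order.qnode by blast
qed

lemma concat_split: "xs \<in> set xss \<Longrightarrow> \<exists>a b. concat xss = a @ xs @ b"
proof -
  assume "xs \<in> set xss"
  then obtain ys zs where "xss = ys @ xs # zs" by (meson split_list)
  then show ?thesis by auto
qed

lemma order_sub:
  "subtree_at T p = Some N \<Longrightarrow> is_order T L \<Longrightarrow>
   \<exists>A L' pre suf. is_order N L' \<and> L = pre @ map ((\<union>) A) L' @ suf"
proof (induction p arbitrary: T L)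
  case Nil
  have "L = [] @ map ((\<union>) {}) L @ []" by (induction L) auto
  then show ?case using Nil by (metis subtree_at.simps(1) option.inject)
next
  case (Cons i p)
  from Cons.prems obtain t where ct: "child T i = Some t" and st: "subtree_at t p = Some N"
    by (auto split: option.splits)
  show ?case
  proof (cases T)
    case (PN S ts)
    with ct have i: "i < length ts" and t: "t = ts ! i" by (auto split: if_splits)
    from Cons.prems(2) PN show ?thesis
    proof (cases rule: is_order.cases)
      case leaf then show ?thesis using i PN by simp
    next
      case (pnode ts0 ls ls' S0)
      have [simp]: "ts0 = ts" "S0 = S" using PN pnode by auto
      have o: "is_order t (ls ! i)" using pnode i t by (auto dest: list_all2_nthD)
      have "ls ! i \<in> set ls" using pnode i by (auto dest: list_all2_lengthD)
      then have "ls ! i \<in> set ls'" using pnode by (metis mset_eq_setD)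
      then obtain a b where ab: "concat ls' = a @ ls ! i @ b" using concat_split by blast
      from Cons.IH[OF st o] obtain A L' pre suf where
        h: "is_order N L'" "ls ! i = pre @ map ((\<union>) A) L' @ suf" by blast
      have "L = (map ((\<union>) S) a @ map ((\<union>) S) pre) @ map ((\<union>) (S \<union> A)) L' @ (map ((\<union>) S) suf @ map ((\<union>) S) b)"
        using pnode ab h by (simp add: Un_assoc)
      then show ?thesis using h by blast
    qed simp_all
  next
    case (QN secs)
    with ct have i: "i < length secs" and t: "snd (secs ! i) = Some t" by (auto split: if_splits)
    obtain Si where si: "secs ! i = (Si, Some t)" using t by (cases "secs ! i") auto
    from Cons.prems(2) QN show ?thesis
    proof (cases rule: is_order.cases)
      case (qnode secs0 ls)
      have [simp]: "secs0 = secs" using QN qnode by auto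
      have q: "qslot is_order (secs ! i) (ls ! i)" using qnode i by (auto dest: list_all2_nthD)
      then obtain l' where l': "is_order t l'" "ls ! i = map ((\<union>) Si) l'"
        using si by (auto simp: qslot_def)
      have "ls ! i \<in> set ls" using qnode i by (auto dest: list_all2_lengthD)
      then obtain a b where ab: "concat ls = a @ ls ! i @ b" using concat_split by blast
      from Cons.IH[OF st l'(1)] obtain A L' pre suf where
        h: "is_order N L'" "l' = pre @ map ((\<union>) A) L' @ suf" by blast
      have "L = (a @ map ((\<union>) Si) pre) @ map ((\<union>) (Si \<union> A)) L' @ (map ((\<union>) Si) suf @ b)"
        using qnode ab h l' by (simp add: Un_assoc)
      then show ?thesis using h by blast
    next
      case (qnode_rev secs0 ls)
      have [simp]: "secs0 = secs" using QN qnode_rev by auto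
      have q: "qslot is_order (secs ! i) (ls ! i)" using qnode_rev i by (auto dest: list_all2_nthD)
      then obtain l' where l': "is_order t l'" "ls ! i = map ((\<union>) Si) l'"
        using si by (auto simp: qslot_def)
      have "ls ! i \<in> set (rev ls)" using qnode_rev i by (auto dest: list_all2_lengthD)
      then obtain a b where ab: "concat (rev ls) = a @ ls ! i @ b" using concat_split by blast
      from Cons.IH[OF st l'(1)] obtain A L' pre suf where
        h: "is_order N L'" "l' = pre @ map ((\<union>) A) L' @ suf" by blast
      have "L = (a @ map ((\<union>) Si) pre) @ map ((\<union>) (Si \<union> A)) L' @ (map ((\<union>) Si) suf @ b)"
        using qnode_rev ab h l' by (simp add: Un_assoc)
      then show ?thesis using h by blast
    qed simp_all
  qed
qed

definition wfq :: "'v mpq \<Rightarrow> bool" where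
  "wfq T \<longleftrightarrow> (\<forall>q secs. subtree_at T q = Some (QN secs) \<longrightarrow> secs \<noteq> [])"

lemma wfq_child: "wfq T \<Longrightarrow> child T i = Some t \<Longrightarrow> wfq t"
  unfolding wfq_def
proof (intro allI impI)
  fix q secs assume w: "\<forall>q secs. subtree_at T q = Some (QN secs) \<longrightarrow> secs \<noteq> []"
    and c: "child T i = Some t" and s: "subtree_at t q = Some (QN secs)"
  have "subtree_at T (i # q) = Some (QN secs)" using c s by simp
  then show "secs \<noteq> []" using w by blast
qed

lemma qslot_ne:
  assumes "qslot (\<lambda>t l. is_order t l \<and> (wfq t \<longrightarrow> l \<noteq> [])) st l"
    and "\<And>t. snd st = Some t \<Longrightarrow> wfq t"
  shows "l \<noteq> []"
proof -
  obtain S0 t0 where st: "st = (S0, t0)" by (cases st)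
  show ?thesis
  proof (cases t0)
    case None then show ?thesis using assms st by (simp add: qslot_def)
  next
    case (Some t) then show ?thesis using assms st by (auto simp: qslot_def)
  qed
qed

lemma order_ne: "is_order T l \<Longrightarrow> wfq T \<Longrightarrow> l \<noteq> []"
proof (induction rule: is_order.induct)
  case (leaf S) then show ?case by simp
next
  case (pnode ts ls ls' S)
  have c: "child (PN S ts) 0 = Some (ts ! 0)" using pnode by simp
  have "ts ! 0 \<in> set ts" using pnode by simp
  have len: "length ls = length ts" using pnode by (auto dest: list_all2_lengthD)
  have "is_order (ts ! 0) (ls ! 0) \<and> (wfq (ts ! 0) \<longrightarrow> ls ! 0 \<noteq> [])"
    using pnode(3) pnode(1) by (auto dest: list_all2_nthD)
  then have ne: "ls ! 0 \<noteq> []" using wfq_child[OF pnode(4) c] by blast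
  have "ls ! 0 \<in> set ls" using len pnode(1) by simp
  then have "ls ! 0 \<in> set ls'" using pnode by (metis mset_eq_setD)
  then show ?case using ne by auto
next
  case (qnode secs ls)
  have "secs \<noteq> []" using qnode(2) unfolding wfq_def by (metis subtree_at.simps(1))
  have len: "length ls = length secs" using qnode by (auto dest: list_all2_lengthD)
  have q: "qslot (\<lambda>t l. is_order t l \<and> (wfq t \<longrightarrow> l \<noteq> [])) (secs ! 0) (ls ! 0)"
    using qnode(1) \<open>secs \<noteq> []\<close> by (auto dest: list_all2_nthD)
  have "ls ! 0 \<noteq> []"
  proof (rule qslot_ne[OF q])
    fix t assume "snd (secs ! 0) = Some t"
    then have "child (QN secs) 0 = Some t" using \<open>secs \<noteq> []\<close> by simp
    then show "wfq t" using wfq_child[OF qnode(2)] by blast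
  qed
  moreover have "ls ! 0 \<in> set ls" using len \<open>secs \<noteq> []\<close> by simp
  ultimately show ?case by auto
next
  case (qnode_rev secs ls)
  have "secs \<noteq> []" using qnode_rev(2) unfolding wfq_def by (metis subtree_at.simps(1))
  have len: "length ls = length secs" using qnode_rev by (auto dest: list_all2_lengthD)
  have q: "qslot (\<lambda>t l. is_order t l \<and> (wfq t \<longrightarrow> l \<noteq> [])) (secs ! 0) (ls ! 0)"
    using qnode_rev(1) \<open>secs \<noteq> []\<close> by (auto dest: list_all2_nthD)
  have "ls ! 0 \<noteq> []"
  proof (rule qslot_ne[OF q])
    fix t assume "snd (secs ! 0) = Some t"
    then have "child (QN secs) 0 = Some t" using \<open>secs \<noteq> []\<close> by simp
    then show "wfq t" using wfq_child[OF qnode_rev(2)] by blast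
  qed
  moreover have "ls ! 0 \<in> set ls" using len \<open>secs \<noteq> []\<close> by simp
  ultimately show ?case by auto
qed

lemma gap:
  fixes ax bx ay by' au bu av bv :: real
  assumes "\<not> max ax ay \<le> min bx by'"
    and "max au ax \<le> min bu bx" "max au ay \<le> min bu by'"
    and "max av ax \<le> min bv bx" "max av ay \<le> min bv by'"
  shows "max au av \<le> min bu bv"
  using assms unfolding max_def min_def by (auto split: if_splits)

lemma two_cliques:
  assumes ig: "interval_graph V (del_edge E x y)" and xy: "x \<noteq> y"
    and c1: "C1 \<in> max_cliques V E" and c2: "C2 \<in> max_cliques V E"
    and "x \<in> C1" "y \<in> C1" "x \<in> C2" "y \<in> C2"
  shows "C1 = C2"
proof -
  from ig obtain a b :: "_ \<Rightarrow> real" where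
    ab: "\<forall>u\<in>V. \<forall>v\<in>V. u \<noteq> v \<longrightarrow> ({u, v} \<in> del_edge E x y \<longleftrightarrow> max (a u) (a v) \<le> min (b u) (b v))"
    unfolding interval_graph_def by blast
  have cl1: "is_clique V E C1" and cl2: "is_clique V E C2" using c1 c2 by (auto simp: max_cliques_def)
  have V1: "C1 \<subseteq> V" and V2: "C2 \<subseteq> V" using cl1 cl2 by (auto simp: is_clique_def)
  have xV: "x \<in> V" "y \<in> V" using V1 assms by auto
  have nxy: "\<not> max (a x) (a y) \<le> min (b x) (b y)"
    using ab xV xy by (auto simp: del_edge_def)
  have adj: "max (a u) (a w) \<le> min (b u) (b w)"
    if "C \<in> {C1, C2}" "u \<in> C" "w \<in> {x, y}" "u \<notin> {x, y}" for C u w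
  proof -
    have cl: "is_clique V E C" using that cl1 cl2 by auto
    have "w \<in> C" using that assms by auto
    have "u \<noteq> w" using that by auto
    then have "{u, w} \<in> E" using cl \<open>w \<in> C\<close> that(2) by (auto simp: is_clique_def)
    moreover have "{u, w} \<noteq> {x, y}" using that(4) by (auto simp: doubleton_eq_iff)
    ultimately have "{u, w} \<in> del_edge E x y" by (simp add: del_edge_def)
    moreover have "u \<in> V" "w \<in> V" using that V1 V2 xV by auto
    ultimately show ?thesis using ab \<open>u \<noteq> w\<close> by blast
  qed
  have key: "{u, v} \<in> E" if "u \<in> C1" "v \<in> C2" "u \<notin> {x, y}" "v \<notin> {x, y}" "u \<noteq> v" for u v
  proof -
    have "max (a u) (a v) \<le> min (b u) (b v)"
      apply (rule gap[OF nxy])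
      using adj that by (auto simp: max.commute min.commute)
    moreover have "u \<in> V" "v \<in> V" using that V1 V2 by auto
    ultimately have "{u, v} \<in> del_edge E x y" using ab that by blast
    then show ?thesis by (simp add: del_edge_def)
  qed
  have K: "is_clique V E (C1 \<union> C2)"
    unfolding is_clique_def
  proof (intro conjI ballI impI)
    show "C1 \<union> C2 \<subseteq> V" using V1 V2 by auto
  next
    fix u v assume u: "u \<in> C1 \<union> C2" and v: "v \<in> C1 \<union> C2" and uv: "u \<noteq> v"
    show "{u, v} \<in> E"
    proof (cases "(u \<in> C1 \<and> v \<in> C1) \<or> (u \<in> C2 \<and> v \<in> C2)")
      case True then show ?thesis using cl1 cl2 uv by (auto simp: is_clique_def)
    next
      case False
      then have "(u \<in> C1 \<and> v \<in> C2 \<and> u \<notin> C2 \<and> v \<notin> C1) \<or> (v \<in> C1 \<and> u \<in> C2 \<and> v \<notin> C2 \<and> u \<notin> C1)"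
        using u v by auto
      then show ?thesis
      proof
        assume h: "u \<in> C1 \<and> v \<in> C2 \<and> u \<notin> C2 \<and> v \<notin> C1"
        then show ?thesis using key[of u v] uv assms by auto
      next
        assume h: "v \<in> C1 \<and> u \<in> C2 \<and> v \<notin> C2 \<and> u \<notin> C1"
        then have "{v, u} \<in> E" using key[of v u] uv assms by auto
        then show ?thesis by (simp add: insert_commute)
      qed
    qed
  qed
  have "C1 \<union> C2 = C1" using c1 K by (auto simp: max_cliques_def)
  moreover have "C1 \<union> C2 = C2" using c2 K by (auto simp: max_cliques_def)
  ultimately show ?thesis by simp
qed

lemma ne_len: "\<forall>x\<in>set xs. x \<noteq> [] \<Longrightarrow> length xs \<le> length (concat xs)"
proof (induction xs)
  case Nil then show ?case by simp
next
  case (Cons a xs) then have "length a \<ge> 1" by (cases a) auto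
  then show ?case using Cons by simp
qed

lemma mpq_wfq: "mpq_tree V E T \<Longrightarrow> subtree_at T p = Some N \<Longrightarrow> wfq N"
  unfolding wfq_def
proof (intro allI impI)
  fix q secs assume m: "mpq_tree V E T" and s: "subtree_at T p = Some N"
    and s2: "subtree_at N q = Some (QN secs)"
  have "subtree_at T (p @ q) = Some (QN secs)" using subtree_comp[OF s] s2 by simp
  then have "qnode_ok secs" using m unfolding mpq_tree_def by blast
  then show "secs \<noteq> []" unfolding qnode_ok_def Let_def by auto
qed

lemma pnode_len:
  assumes m: "mpq_tree V E T" and s: "subtree_at T p = Some (PN S ts)" and ts: "ts \<noteq> []"
    and o: "is_order (PN S ts) l"
  shows "2 \<le> length l \<and> (\<forall>c\<in>set l. S \<subseteq> c)"
  using o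
proof (cases rule: is_order.cases)
  case leaf then show ?thesis using ts by simp
next
  case (pnode ls ls')
  have len: "length ls = length ts" using pnode by (auto dest: list_all2_lengthD)
  have wf: "wfq (ts ! j)" if "j < length ts" for j
  proof -
    have "subtree_at T (p @ [j]) = Some (ts ! j)" using subtree_comp[OF s, of "[j]"] that by simp
    then show ?thesis using mpq_wfq[OF m] by blast
  qed
  have ne: "\<forall>x\<in>set ls. x \<noteq> []"
  proof
    fix x assume "x \<in> set ls"
    then obtain j where j: "j < length ls" "x = ls ! j" by (auto simp: in_set_conv_nth)
    have "is_order (ts ! j) (ls ! j)" using pnode(3) j len by (simp add: list_all2_nthD)
    then show "x \<noteq> []" using order_ne wf j len by auto
  qed
  have set': "set ls' = set ls" and len': "length ls' = length ls" using pnode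
    by (metis mset_eq_setD, metis mset_eq_length)
  have "2 \<le> length (concat ls')"
  proof (cases "length ts \<ge> 2")
    case True
    then show ?thesis using ne_len[of ls'] ne set' len' len by auto
  next
    case False
    then obtain t where t: "ts = [t]" using ts by (cases ts; cases "tl ts") auto
    have "pnode_ok S ts" using m s unfolding mpq_tree_def by blast
    then obtain secs where tq: "t = QN secs" using t unfolding pnode_ok_def by (cases t) auto
    have "subtree_at T (p @ [0]) = Some t" using subtree_comp[OF s, of "[0]"] t by simp
    then have qo: "qnode_ok secs" using m tq unfolding mpq_tree_def by blast
    then have l3: "length secs \<ge> 3" unfolding qnode_ok_def Let_def by auto
    obtain l0 where ls0: "ls = [l0]" using len t by (cases ls) auto
    then have "ls' = [l0]" using set' len' by (cases ls') auto
    have oq: "is_order (QN secs) l0" using pnode ls0 t tq by simp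
    have wt: "\<And>i t'. i < length secs \<Longrightarrow> snd (secs ! i) = Some t' \<Longrightarrow> wfq t'"
    proof -
      fix i t' assume "i < length secs" "snd (secs ! i) = Some t'"
      then have "subtree_at T (p @ [0, i]) = Some t'" using subtree_comp[OF s, of "[0, i]"] t tq by simp
      then show "wfq t'" using mpq_wfq[OF m] by blast
    qed
    have qne: "\<forall>x\<in>set lsq. x \<noteq> []" if la: "list_all2 (qslot is_order) secs lsq" for lsq
    proof
      fix x assume "x \<in> set lsq"
      then obtain i where i: "i < length lsq" "x = lsq ! i" by (auto simp: in_set_conv_nth)
      have il: "i < length secs" using i la by (auto dest: list_all2_lengthD)
      have q: "qslot is_order (secs ! i) (lsq ! i)" using la il by (auto dest: list_all2_nthD)
      obtain S0 t0 where st: "secs ! i = (S0, t0)" by (cases "secs ! i")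
      show "x \<noteq> []"
      proof (cases t0)
        case None then show ?thesis using q st i by (simp add: qslot_def)
      next
        case (Some t')
        then have "wfq t'" using wt[OF il] st by simp
        then obtain l' where "is_order t' l'" "lsq ! i = map ((\<union>) S0) l'"
          using q st Some by (auto simp: qslot_def)
        moreover have "l' \<noteq> []" using order_ne[OF \<open>is_order t' l'\<close> \<open>wfq t'\<close>] .
        ultimately show ?thesis using i by simp
      qed
    qed
    have "3 \<le> length l0" using oq
    proof (cases rule: is_order.cases)
      case (qnode lsq)
      have "length lsq = length secs" using qnode by (auto dest: list_all2_lengthD)
      then show ?thesis using ne_len[of lsq] qne[of lsq] qnode l3 by auto
    next
      case (qnode_rev lsq)
      have "length lsq = length secs" using qnode_rev by (auto dest: list_all2_lengthD)
      then show ?thesis using ne_len[of "rev lsq"] qne[of lsq] qnode_rev l3 by auto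
    qed
    then show ?thesis using \<open>ls' = [l0]\<close> by simp
  qed
  then show ?thesis using pnode by auto
qed

theorem mainTheorem2:
  fixes V :: "'v set" and E :: "'v set set" and T :: "'v mpq"
    and x y :: 'v and p :: "nat list" and S :: "'v set" and ts :: "'v mpq list"
  assumes "interval_graph V E"
    and "mpq_tree V E T"
    and "x \<noteq> y"
    and "subtree_at T p = Some (PN S ts)"
    and "x \<in> S" and "y \<in> S"
    and "ts \<noteq> []"
  shows "\<not> interval_graph V (del_edge E x y)"
proof
  assume ig: "interval_graph V (del_edge E x y)"
  obtain L where L: "is_order T L" using ex_order by blast
  then have cco: "consecutive_clique_order V E L" using assms(2) unfolding mpq_tree_def by blast
  from order_sub[OF assms(4) L] obtain A L' pre suf where
    o: "is_order (PN S ts) L'" and Ld: "L = pre @ map ((\<union>) A) L' @ suf" by blast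
  from pnode_len[OF assms(2) assms(4) assms(7) o] have
    l2: "2 \<le> length L'" and sub: "\<forall>c\<in>set L'. S \<subseteq> c" by auto
  have d: "distinct (map ((\<union>) A) L')" using cco Ld by (simp add: consecutive_clique_order_def)
  let ?C1 = "A \<union> L' ! 0" and ?C2 = "A \<union> L' ! 1"
  have "\<forall>i<length L'. \<forall>j<length L'. i \<noteq> j \<longrightarrow> map ((\<union>) A) L' ! i \<noteq> map ((\<union>) A) L' ! j"
    using d unfolding distinct_conv_nth by simp
  moreover have l01: "0 < length L'" "1 < length L'" using l2 by auto
  ultimately have "map ((\<union>) A) L' ! 0 \<noteq> map ((\<union>) A) L' ! 1" by blast
  then have ne: "?C1 \<noteq> ?C2" using l01 by simp
  have "L' ! 0 \<in> set L'" "L' ! 1 \<in> set L'" using l01 by auto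
  then have "?C1 \<in> set L" "?C2 \<in> set L" using Ld by auto
  then have mc: "?C1 \<in> max_cliques V E" "?C2 \<in> max_cliques V E"
    using cco by (auto simp: consecutive_clique_order_def)
  have "L' ! 0 \<in> set L'" "L' ! 1 \<in> set L'" using l01 by auto
  then have "S \<subseteq> ?C1" "S \<subseteq> ?C2" using sub by auto
  then have "?C1 = ?C2" using two_cliques[OF ig assms(3) mc] assms(5,6) by blast
  then show False using ne by simp
qed

end
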